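(* Let $B\in\mathbb{C}^{n\times k}$ with $k\le n$ and $\operatorname{rank}(B)=k$, and let $P_*=B(B^{\mathrm{H}}B)^{-1/2}$ be the unique orthonormal polar factor of $B$. Given $P\in\mathbb{C}^{n\times k}$ with $P^{\mathrm{H}}P=I_k$, let $$\eta=\|B\|_{\mathrm{tr}}-\operatorname{Re}(\operatorname{tr}(P^{\mathrm{H}}B)),\qquad \epsilon=\sqrt{\frac{2\eta}{\sigma_{\min}(B)}}.$$ Then: (a) $$\frac{\|B-P(P^{\mathrm{H}}B)\|_{\mathrm{F}}}{\|B\|_2}\le\|\sin\Theta({\cal R}(P),{\cal R}(P_* ))\|_{\mathrm{F}}\le\epsilon;$$ (b) if $P^{\mathrm{H}}B$ is Hermitian positive definite, then $$\|P-P_*\|_{\mathrm{F}}\le\left(1+\frac{2\|B\|_2}{\sigma_{\min}(B)+\sigma_{\min}(P^{\mathrm{H}}B)}\right)\epsilon;$$ (c) if ${\cal R}(P)={\cal R}(P_* )$, then $\|P-P_*\|_{\mathrm{F}}\le\epsilon$.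
   Context: For a matrix $X$, $X^{\mathrm{H}}$ is its conjugate transpose, ${\cal R}(X)$ its column space, $\|X\|_2$ its largest singular value, $\|X\|_{\mathrm{F}}=\sqrt{\operatorname{tr}(X^{\mathrm{H}}X)}$ its Frobenius norm. For $B\in\mathbb{C}^{n\times k}$ with singular values $\sigma_1(B)\ge\cdots\ge\sigma_k(B)$, $\sigma_{\min}(B)=\sigma_k(B)$ and $\|B\|_{\mathrm{tr}}=\sum_{i=1}^k\sigma_i(B)$ (trace/nuclear norm); $\operatorname{Re}$ denotes the real part. A polar decomposition of $B$ is $B=P\Lambda$ with $P^{\mathrm{H}}P=I_k$ and $\Lambda\succeq0$; $P$ is an orthonormal polar factor. For two $k$-dimensional subspaces ${\cal X}={\cal R}(X)$, ${\cal Y}={\cal R}(Y)$ of $\mathbb{C}^n$ with $X,Y$ having orthonormal columns, the canonical angles are $\theta_i=\arccos\sigma_i(X^{\mathrm{H}}Y)\in[0,\pi/2]$, $i=1,\dots,k$; $\Theta({\cal X},{\cal Y})=\operatorname{diag}(\theta_1,\dots,\theta_k)$ and $\|\sin\Theta({\cal X},{\cal Y})\|_{\mathrm{F}}=\big(\sum_{i=1}^k\sin^2\theta_i\big)^{1/2}$. *)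

theory Defs
  imports "HOL-Analysis.Analysis" "HOL-Library.Multiset"
begin

text \<open>Complex matrices are represented as \<open>complex^'k^'n\<close> (an n-by-k matrix: rows indexed
  by \<open>'n\<close>, columns by \<open>'k\<close>), with \<open>**\<close> the matrix product and \<open>*v\<close> matrix-vector product.\<close>

definition cadj :: "complex^'k^'n \<Rightarrow> complex^'n^'k" where
  "cadj A = (\<chi> i j. cnj (A $ j $ i))"

definition orthonormal_cols :: "complex^'k^'n \<Rightarrow> bool" where
  "orthonormal_cols X \<longleftrightarrow> cadj X ** X = mat 1"

definition diag_mat :: "('k \<Rightarrow> real) \<Rightarrow> complex^'k^'k" where
  "diag_mat s = (\<chi> i j. if i = j then complex_of_real (s i) else 0)"

definition is_svd :: "complex^'k^'n \<Rightarrow> complex^'k^'n \<Rightarrow> ('k \<Rightarrow> real) \<Rightarrow> complex^'k^'k \<Rightarrow> bool" where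
  "is_svd B U s V \<longleftrightarrow> orthonormal_cols U \<and> orthonormal_cols V \<and> (\<forall>i. 0 \<le> s i)
     \<and> B = U ** diag_mat s ** cadj V"

definition singular_values :: "complex^'k^'n \<Rightarrow> real multiset" where
  "singular_values B = (SOME M. \<exists>U s V. is_svd B U s V \<and> M = image_mset s (mset_set UNIV))"

definition sigma_max :: "complex^'k^'n \<Rightarrow> real" where
  "sigma_max B = Max (set_mset (singular_values B))"

definition sigma_min :: "complex^'k^'n \<Rightarrow> real" where
  "sigma_min B = Min (set_mset (singular_values B))"

definition trace_norm :: "complex^'k^'n \<Rightarrow> real" where
  "trace_norm B = sum_mset (singular_values B)"

definition frob_norm :: "complex^'k^'n \<Rightarrow> real" where
  "frob_norm X = sqrt (Re (trace (cadj X ** X)))"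

definition col_space :: "complex^'k^'n \<Rightarrow> (complex^'n) set" where
  "col_space X = range (\<lambda>v. X *v v)"

definition cinner :: "complex^'n \<Rightarrow> complex^'n \<Rightarrow> complex" where
  "cinner x y = (\<Sum>i\<in>UNIV. cnj (x $ i) * y $ i)"

definition hermitian :: "complex^'k^'k \<Rightarrow> bool" where
  "hermitian M \<longleftrightarrow> cadj M = M"

definition pos_def :: "complex^'k^'k \<Rightarrow> bool" where
  "pos_def M \<longleftrightarrow> hermitian M \<and> (\<forall>x. x \<noteq> 0 \<longrightarrow> Re (cinner x (M *v x)) > 0)"

definition pos_semidef :: "complex^'k^'k \<Rightarrow> bool" where
  "pos_semidef M \<longleftrightarrow> hermitian M \<and> (\<forall>x. Re (cinner x (M *v x)) \<ge> 0)"

definition orth_polar_factor :: "complex^'k^'n \<Rightarrow> complex^'k^'n \<Rightarrow> bool" where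
  "orth_polar_factor P B \<longleftrightarrow> orthonormal_cols P \<and> (\<exists>\<Lambda>. pos_semidef \<Lambda> \<and> B = P ** \<Lambda>)"

text \<open>For X, Y with orthonormal columns: the Frobenius norm of sin \<Theta>(R(X), R(Y)),
  canonical angles being arccos of the singular values of X^H Y.\<close>
definition sin_theta_F :: "complex^'k^'n \<Rightarrow> complex^'k^'n \<Rightarrow> real" where
  "sin_theta_F X Y = sqrt (sum_mset (image_mset (\<lambda>\<sigma>. (sin (arccos \<sigma>))^2)
                                                (singular_values (cadj X ** Y))))"

end

theory Submission
  imports Defs
begin


lemma cadj_nth[simp]: "cadj A $ i $ j = cnj (A $ j $ i)"
  by (simp add: cadj_def)

lemma cadj_cadj[simp]: "cadj (cadj A) = A"
  by (simp add: vec_eq_iff)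

lemma cadj_mult: "cadj (A ** B) = cadj B ** cadj A"
  by (simp add: vec_eq_iff matrix_matrix_mult_def mult.commute)

lemma cadj_add: "cadj (A + B) = cadj A + cadj B"
  by (simp add: vec_eq_iff)

lemma cadj_diff: "cadj (A - B) = cadj A - cadj B"
  by (simp add: vec_eq_iff)

lemma cadj_mat1[simp]: "cadj (mat 1) = mat 1"
  by (simp add: vec_eq_iff mat_def)

lemma cadj_0[simp]: "cadj 0 = 0"
  by (simp add: vec_eq_iff)

lemma diag_mat_nth[simp]: "diag_mat s $ i $ j = (if i = j then complex_of_real (s i) else 0)"
  by (simp add: diag_mat_def)

lemma cadj_diag[simp]: "cadj (diag_mat s) = diag_mat s"
  by (simp add: vec_eq_iff)

lemma mult_diag_right: "(A ** diag_mat s) $ i $ j = A $ i $ j * s j"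
  by (simp add: matrix_matrix_mult_def if_distrib if_distribR cong: if_cong)

lemma mult_diag_left: "(diag_mat s ** A) $ i $ j = s i * A $ i $ j"
  by (simp add: matrix_matrix_mult_def if_distrib if_distribR cong: if_cong)

lemma diag_mult_diag: "diag_mat s ** diag_mat t = diag_mat (\<lambda>i. s i * t i)"
  by (simp add: vec_eq_iff mult_diag_left)

lemma trace_cadj: "trace (cadj A) = cnj (trace A)"
  by (simp add: trace_def)

lemma trace_diag: "trace (diag_mat s) = complex_of_real (\<Sum>i\<in>UNIV. s i)"
  by (simp add: trace_def)

lemma inner_complex_Re: "inner (x::complex) y = Re (cnj x * y)"
  by (simp add: inner_complex_def)

lemma inner_mat_trace:
  fixes X Y :: "complex^'k^'n"
  shows "inner X Y = Re (trace (cadj X ** Y))"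
proof -
  have "inner X Y = (\<Sum>i\<in>UNIV. \<Sum>j\<in>UNIV. Re (cnj (X$i$j) * Y$i$j))"
    by (simp add: inner_vec_def inner_complex_Re)
  also have "\<dots> = (\<Sum>j\<in>UNIV. \<Sum>i\<in>UNIV. Re (cnj (X$i$j) * Y$i$j))"
    by (rule sum.swap)
  also have "\<dots> = Re (trace (cadj X ** Y))"
    by (simp add: trace_def matrix_matrix_mult_def Re_sum)
  finally show ?thesis .
qed

lemma frob_norm_eq: "frob_norm X = norm X"
  by (simp add: frob_norm_def norm_eq_sqrt_inner inner_mat_trace)

lemma inner_cadj: "inner (cadj X) (cadj Y) = inner X Y"
proof -
  have "inner (cadj X) (cadj Y) = (\<Sum>i\<in>UNIV. \<Sum>j\<in>UNIV. inner (X$j$i) (Y$j$i))"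
    by (simp add: inner_vec_def inner_complex_def)
  also have "\<dots> = inner X Y" by (simp add: inner_vec_def) (rule sum.swap)
  finally show ?thesis .
qed

lemma norm_cadj: "norm (cadj X) = norm X"
  by (simp add: norm_eq_sqrt_inner inner_cadj)


lemma cinner_Re: "Re (cinner x y) = inner x y"
  by (simp add: cinner_def inner_vec_def inner_complex_Re Re_sum)

lemma cinner_self: "cinner x x = complex_of_real ((norm x)^2)"
proof -
  have "cinner x x = (\<Sum>i\<in>UNIV. complex_of_real ((cmod (x$i))^2))"
    by (simp add: cinner_def complex_norm_square[symmetric] mult.commute)
  also have "\<dots> = complex_of_real ((norm x)^2)"
    by (simp add: norm_vec_def L2_set_def sum_nonneg)
  finally show ?thesis .
qed

lemma cinner_matrix: "cinner x (A *v y) = cinner (cadj A *v x) y"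
  by (simp add: cinner_def matrix_vector_mult_def sum_distrib_left sum_distrib_right
      mult_ac) (rule sum.swap)

lemma cinner_cnj: "cinner y x = cnj (cinner x y)"
  by (simp add: cinner_def mult.commute)

lemma cinner_add_right: "cinner x (y + z) = cinner x y + cinner x z"
  by (simp add: cinner_def distrib_left sum.distrib)

lemma cinner_diff_right: "cinner x (y - z) = cinner x y - cinner x z"
  by (simp add: cinner_def right_diff_distrib sum_subtractf)

lemma cinner_scale_right: "cinner x (c *s y) = c * cinner x y"
  by (simp add: cinner_def sum_distrib_left mult_ac)

lemma cinner_add_left: "cinner (y + z) x = cinner y x + cinner z x"
  by (simp add: cinner_def distrib_right sum.distrib)

lemma cinner_diff_left: "cinner (y - z) x = cinner y x - cinner z x"
  by (simp add: cinner_def left_diff_distrib sum_subtractf)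

lemma cinner_scale_left: "cinner (c *s y) x = cnj c * cinner y x"
  by (simp add: cinner_def sum_distrib_left mult_ac)

lemma cinner_zero_left[simp]: "cinner 0 x = 0" and cinner_zero_right[simp]: "cinner x 0 = 0"
  by (simp_all add: cinner_def)

lemma cinner_sum_right: "cinner x (sum f S) = (\<Sum>j\<in>S. cinner x (f j))"
  by (simp add: cinner_def sum_distrib_left sum_component) (rule sum.swap)

lemma cinner_sum_left: "cinner (sum f S) x = (\<Sum>j\<in>S. cinner (f j) x)"
  by (simp add: cinner_def sum_distrib_right sum_component) (rule sum.swap)

lemma inner_matrix: "inner x (A *v y) = inner (cadj A *v x) y"
  by (metis cinner_Re cinner_matrix)



definition mk_mat :: "('k \<Rightarrow> complex^'n) \<Rightarrow> complex^'k^'n" where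
  "mk_mat f = (\<chi> r c. f c $ r)"

lemma mk_mat_nth[simp]: "mk_mat f $ r $ c = f c $ r"
  by (simp add: mk_mat_def)

lemma column_mk_mat[simp]: "column c (mk_mat f) = f c"
  by (simp add: column_def vec_eq_iff)

lemma mk_mat_column: "mk_mat (\<lambda>c. column c A) = A"
  by (simp add: column_def vec_eq_iff)

lemma cadj_mk_mat_mult: "(cadj (mk_mat f) ** mk_mat g) $ i $ j = cinner (f i) (g j)"
  by (simp add: matrix_matrix_mult_def cinner_def)

lemma orthonormal_mk_mat:
  "orthonormal_cols (mk_mat f) \<longleftrightarrow> (\<forall>i j. cinner (f i) (f j) = (if i = j then 1 else 0))"
  by (simp add: orthonormal_cols_def vec_eq_iff cadj_mk_mat_mult mat_def)

lemma mult_mk_mat: "A ** mk_mat f = mk_mat (\<lambda>c. A *v f c)"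
  by (simp add: vec_eq_iff matrix_matrix_mult_def matrix_vector_mult_def)

lemma mk_mat_diag: "mk_mat f ** diag_mat s = mk_mat (\<lambda>c. complex_of_real (s c) *s f c)"
  by (simp add: vec_eq_iff mult_diag_right mult.commute)

lemma column_mult: "column j (A ** X) = A *v column j X"
  by (simp add: column_def vec_eq_iff matrix_matrix_mult_def matrix_vector_mult_def)

lemma inner_columns: "inner (X::complex^'k^'n) Y = (\<Sum>j\<in>UNIV. inner (column j X) (column j Y))"
proof -
  have "inner X Y = (\<Sum>i\<in>UNIV. \<Sum>j\<in>UNIV. inner (X$i$j) (Y$i$j))"
    by (simp add: inner_vec_def)
  also have "\<dots> = (\<Sum>j\<in>UNIV. \<Sum>i\<in>UNIV. inner (X$i$j) (Y$i$j))" by (rule sum.swap)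
  also have "\<dots> = (\<Sum>j\<in>UNIV. inner (column j X) (column j Y))"
    by (simp add: inner_vec_def column_def)
  finally show ?thesis .
qed

lemma norm_sq_columns: "(norm (X::complex^'k^'n))^2 = (\<Sum>j\<in>UNIV. (norm (column j X))^2)"
  by (simp add: power2_norm_eq_inner inner_columns)

lemma col_bound_lower:
  fixes A :: "complex^'n^'n" and X :: "complex^'k^'n"
  assumes "\<And>x. m * (norm x)^2 \<le> inner x (A *v x)"
  shows "m * (norm X)^2 \<le> inner X (A ** X)"
proof -
  have "m * (norm X)^2 = (\<Sum>j\<in>UNIV. m * (norm (column j X))^2)"
    by (simp add: norm_sq_columns sum_distrib_left)
  also have "\<dots> \<le> (\<Sum>j\<in>UNIV. inner (column j X) (A *v column j X))"
    by (rule sum_mono) (rule assms)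
  also have "\<dots> = inner X (A ** X)"
    by (simp add: inner_columns column_mult)
  finally show ?thesis .
qed

lemma col_bound_norm:
  fixes A :: "complex^'m^'n" and X :: "complex^'k^'m"
  assumes c: "c \<ge> 0" and b: "\<And>x. norm (A *v x) \<le> c * norm x"
  shows "norm (A ** X) \<le> c * norm X"
proof -
  have "(norm (A ** X))^2 = (\<Sum>j\<in>UNIV. (norm (A *v column j X))^2)"
    by (simp add: norm_sq_columns column_mult)
  also have "\<dots> \<le> (\<Sum>j\<in>UNIV. (c * norm (column j X))^2)"
    by (rule sum_mono) (rule power_mono[OF b], simp)
  also have "\<dots> = (c * norm X)^2"
    by (simp add: norm_sq_columns power_mult_distrib sum_distrib_left)
  finally show ?thesis
    using c by (meson norm_ge_zero power2_le_imp_le mult_nonneg_nonneg)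
qed

lemma row_bound_norm:
  fixes A :: "complex^'m^'m" and X :: "complex^'m^'n"
  assumes c: "c \<ge> 0" and b: "\<And>x. norm (cadj A *v x) \<le> c * norm x"
  shows "norm (X ** A) \<le> c * norm X"
proof -
  have "norm (X ** A) = norm (cadj A ** cadj X)" by (metis norm_cadj cadj_mult)
  also have "\<dots> \<le> c * norm (cadj X)" by (rule col_bound_norm[OF c b])
  finally show ?thesis by (simp add: norm_cadj)
qed

lemma row_bound_lower:
  fixes A :: "complex^'m^'m" and X :: "complex^'m^'n"
  assumes h: "cadj A = A" and b: "\<And>x. m * (norm x)^2 \<le> inner x (A *v x)"
  shows "m * (norm X)^2 \<le> inner X (X ** A)"
proof -
  have "m * (norm (cadj X))^2 \<le> inner (cadj X) (A ** cadj X)" by (rule col_bound_lower[OF b])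
  also have "A ** cadj X = cadj (X ** A)" using h by (simp add: cadj_mult)
  finally show ?thesis by (simp add: norm_cadj inner_cadj)
qed

lemma unitary_right:
  fixes V :: "complex^'k^'k"
  assumes "cadj V ** V = mat 1" shows "V ** cadj V = mat 1"
  using assms matrix_left_right_inverse by blast

lemma orth_norm:
  assumes "orthonormal_cols Q" shows "norm (Q *v x) = norm x"
proof -
  have "inner (Q *v x) (Q *v x) = inner (cadj Q *v (Q *v x)) x"
    by (rule inner_matrix)
  also have "cadj Q *v (Q *v x) = x"
    using assms by (simp add: matrix_vector_mul_assoc orthonormal_cols_def)
  finally show ?thesis by (simp add: norm_eq_sqrt_inner)
qed

lemma bessel:
  assumes "orthonormal_cols Q"
  shows "(norm (y - Q *v (cadj Q *v y)))^2 = (norm y)^2 - (norm (cadj Q *v y))^2"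
proof -
  let ?z = "Q *v (cadj Q *v y)"
  let ?w = "cadj Q *v y"
  have 1: "inner y ?z = (norm ?w)^2"
  proof -
    have "inner y ?z = inner ?w ?w" by (rule inner_matrix)
    then show ?thesis by (simp only: power2_norm_eq_inner)
  qed
  have 2: "(norm ?z)^2 = (norm ?w)^2"
    using orth_norm[OF assms, of ?w] by (simp only:)
  have 3: "(norm (y - ?z))^2 = (norm y)^2 - 2 * inner y ?z + (norm ?z)^2"
    unfolding power2_norm_eq_inner inner_diff_left inner_diff_right
    by (simp only: inner_commute[of ?z y])
  show ?thesis unfolding 3 1 2 by simp
qed

lemma bessel_le:
  assumes "orthonormal_cols Q" shows "norm (cadj Q *v y) \<le> norm y"
proof -
  have "(norm (cadj Q *v y))^2 \<le> (norm y)^2" using bessel[OF assms, of y]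
    by (metis diff_ge_0_iff_ge zero_le_power2)
  thus ?thesis using power2_le_imp_le norm_ge_zero by blast
qed



lemma cinner_scaleR_right: "cinner x (c *\<^sub>R y) = complex_of_real c * cinner x y"
  unfolding cinner_def sum_distrib_left vector_scaleR_component
  by (simp add: scaleR_conv_of_real mult_ac)

lemma cinner_scaleR_left: "cinner (c *\<^sub>R y) x = complex_of_real c * cinner y x"
  unfolding cinner_def sum_distrib_left vector_scaleR_component
  by (simp add: scaleR_conv_of_real mult_ac)

lemma mat_vec_scaleR: "(A::complex^'m^'n) *v (c *\<^sub>R z) = c *\<^sub>R (A *v z)"
  by (simp add: vec_eq_iff matrix_vector_mult_def scaleR_sum_right)

lemma cinner_axis: "cinner x (axis i 1) = cnj (x $ i)"
  by (simp add: cinner_def axis_def if_distrib if_distribR cong: if_cong)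

lemma exists_orth_unit:
  fixes f :: "'a \<Rightarrow> complex^'n"
  assumes fin: "finite J" and card: "card J < CARD('n)"
    and orth: "\<forall>i\<in>J. \<forall>j\<in>J. cinner (f i) (f j) = (if i = j then 1 else 0)"
  shows "\<exists>y. norm y = 1 \<and> (\<forall>j\<in>J. cinner (f j) y = 0)"
proof -
  define p where "p e = e - (\<Sum>j\<in>J. cinner (f j) e *s f j)" for e :: "complex^'n"
  have porth: "cinner (f l) (p e) = 0" if l: "l \<in> J" for l e
  proof -
    have "cinner (f l) (p e) = cinner (f l) e - (\<Sum>j\<in>J. cinner (f j) e * cinner (f l) (f j))"
      by (simp add: p_def cinner_diff_right cinner_sum_right cinner_scale_right)
    also have "(\<Sum>j\<in>J. cinner (f j) e * cinner (f l) (f j)) = (\<Sum>j\<in>J. if l = j then cinner (f j) e else 0)"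
      using l orth by (intro sum.cong) auto
    also have "\<dots> = cinner (f l) e" using l fin by simp
    finally show ?thesis by simp
  qed
  have "\<exists>i. p (axis i 1) \<noteq> 0"
  proof (rule ccontr)
    assume "\<not> ?thesis"
    hence z: "p (axis i 1) = 0" for i by auto
    have one: "1 = (\<Sum>j\<in>J. cnj (f j $ i) * f j $ i)" for i
    proof -
      have "axis i 1 = (\<Sum>j\<in>J. cinner (f j) (axis i 1) *s f j)"
        using z[of i] by (simp add: p_def)
      hence "axis i (1::complex) $ i = (\<Sum>j\<in>J. cinner (f j) (axis i 1) *s f j) $ i" by simp
      thus ?thesis by (simp add: sum_component cinner_axis)
    qed
    have "of_nat CARD('n) = (\<Sum>i\<in>(UNIV::'n set). (1::complex))" by simp
    also have "\<dots> = (\<Sum>i\<in>UNIV. \<Sum>j\<in>J. cnj (f j $ i) * f j $ i)" using one by simp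
    also have "\<dots> = (\<Sum>j\<in>J. \<Sum>i\<in>UNIV. cnj (f j $ i) * f j $ i)" by (rule sum.swap)
    also have "\<dots> = (\<Sum>j\<in>J. cinner (f j) (f j))" by (simp add: cinner_def)
    also have "\<dots> = (\<Sum>j\<in>J. 1)" using orth by (intro sum.cong) auto
    also have "\<dots> = of_nat (card J)" by simp
    finally have "CARD('n) = card J" by (metis of_nat_eq_iff)
    thus False using card by simp
  qed
  then obtain i where pi: "p (axis i 1) \<noteq> 0" by blast
  define y where "y = (1 / norm (p (axis i 1))) *\<^sub>R p (axis i 1)"
  have "norm y = 1" using pi by (simp add: y_def)
  moreover have "\<forall>j\<in>J. cinner (f j) y = 0"
    using porth by (simp add: y_def cinner_scaleR_right)
  ultimately show ?thesis by blast
qed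

lemma orth_extend_aux:
  fixes u :: "'k::finite \<Rightarrow> complex^'n"
  assumes "CARD('k) \<le> CARD('n)"
  shows "card (- J) = m \<Longrightarrow> \<forall>i\<in>J. \<forall>j\<in>J. cinner (u i) (u j) = (if i = j then 1 else 0) \<Longrightarrow>
    \<exists>u'. (\<forall>i\<in>J. u' i = u i) \<and> (\<forall>i j. cinner (u' i) (u' j) = (if i = j then 1 else 0))"
proof (induction m arbitrary: J u)
  case 0
  have "finite (- J)" by simp
  hence "J = UNIV" using 0 by (auto simp add: card_eq_0_iff)
  thus ?case using 0 by blast
next
  case (Suc m)
  then obtain i where i: "i \<notin> J"
    by (metis card.empty Compl_iff empty_iff equals0I nat.distinct(1))
  have "card J < CARD('k)"
  proof -
    have "J \<subset> UNIV" using i by auto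
    thus ?thesis by (simp add: psubset_card_mono)
  qed
  with assms have cJ: "card J < CARD('n)" by simp
  obtain y where y: "norm y = 1" "\<forall>j\<in>J. cinner (u j) y = 0"
    using exists_orth_unit[OF finite cJ Suc.prems(2)] by blast
  define u1 where "u1 = u(i := y)"
  have yy: "cinner y y = 1" using y(1) by (simp add: cinner_self)
  have orth1: "\<forall>a\<in>insert i J. \<forall>b\<in>insert i J. cinner (u1 a) (u1 b) = (if a = b then 1 else 0)"
  proof -
    have y2: "\<forall>j\<in>J. cinner y (u j) = 0" using y(2) cinner_cnj by (metis complex_cnj_zero)
    show ?thesis using Suc.prems(2) y(2) y2 i yy by (auto simp: u1_def)
  qed
  have "card (- insert i J) = m"
  proof -
    have "- J = insert i (- insert i J)" using i by auto
    hence "card (- J) = Suc (card (- insert i J))" by (simp add: card_insert_if)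
    thus ?thesis using Suc.prems(1) by simp
  qed
  from Suc.IH[OF this orth1] obtain u' where
    "\<forall>a\<in>insert i J. u' a = u1 a" "\<forall>a b. cinner (u' a) (u' b) = (if a = b then 1 else 0)" by blast
  thus ?case using i unfolding u1_def by (intro exI[of _ u']) auto
qed

lemma orth_extend:
  fixes u :: "'k::finite \<Rightarrow> complex^'n"
  assumes "CARD('k) \<le> CARD('n)" "\<forall>i\<in>J. \<forall>j\<in>J. cinner (u i) (u j) = (if i = j then 1 else 0)"
  shows "\<exists>u'. (\<forall>i\<in>J. u' i = u i) \<and> (\<forall>i j. cinner (u' i) (u' j) = (if i = j then 1 else 0))"
  using orth_extend_aux[OF assms(1) refl assms(2)] .



lemma cinner_cont: "continuous_on UNIV (\<lambda>y. cinner x y)"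
  unfolding cinner_def by (intro continuous_intros)

lemma mat_vec_cont: "continuous_on S ((*v) (A::complex^'m^'n))"
  by (rule matrix_vector_mult_linear_continuous_on)

lemma eig_step:
  fixes A :: "complex^'k^'k" and f :: "'a \<Rightarrow> complex^'k"
  assumes herm: "cadj A = A" and fin: "finite J" and card: "card J < CARD('k)"
    and orth: "\<forall>i\<in>J. \<forall>j\<in>J. cinner (f i) (f j) = (if i = j then 1 else 0)"
    and eig: "\<forall>j\<in>J. A *v f j = l j *\<^sub>R f j"
  shows "\<exists>y r. norm y = 1 \<and> (\<forall>j\<in>J. cinner (f j) y = 0) \<and> A *v y = r *\<^sub>R y"
proof -
  define S where "S = {y. \<forall>j\<in>J. cinner (f j) y = 0}"
  define q where "q y = inner y (A *v y)" for y
  have Ssc: "c *\<^sub>R y \<in> S" if "y \<in> S" for c y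
    using that by (simp add: S_def cinner_scaleR_right)
  have Sdiff: "y - z \<in> S" if "y \<in> S" "z \<in> S" for y z
    using that by (simp add: S_def cinner_diff_right)
  have closedS: "closed S"
  proof -
    have "S = (\<Inter>j\<in>J. {y. cinner (f j) y = 0})" by (auto simp: S_def)
    moreover have "closed {y. cinner (f j) y = 0}" for j
      by (rule closed_Collect_eq) (auto intro: cinner_cont)
    ultimately show ?thesis by auto
  qed
  define T where "T = S \<inter> sphere 0 1"
  have compT: "compact T" unfolding T_def
    by (rule closed_Int_compact[OF closedS compact_sphere])
  obtain y1 where y1: "norm y1 = 1" "\<forall>j\<in>J. cinner (f j) y1 = 0"
    using exists_orth_unit[OF fin card orth] by blast
  hence "T \<noteq> {}" by (auto simp: T_def S_def)
  moreover have "continuous_on T q" unfolding q_def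
    by (intro continuous_on_inner continuous_on_id continuous_on_compose2[OF mat_vec_cont[of UNIV A]]) auto
  ultimately obtain y0 where y0T: "y0 \<in> T" and y0max: "\<forall>y\<in>T. q y \<le> q y0"
    using continuous_attains_sup[OF compT] by blast
  define r where "r = q y0"
  have y0S: "y0 \<in> S" and ny0: "norm y0 = 1" using y0T by (auto simp: T_def)
  have qsc: "q (c *\<^sub>R y) = c^2 * q y" for c y
    by (simp add: q_def mat_vec_scaleR power2_eq_square)
  have bound: "q z \<le> r * (norm z)^2" if zS: "z \<in> S" for z
  proof (cases "z = 0")
    case True thus ?thesis by (simp add: q_def)
  next
    case False
    define z' where "z' = (1 / norm z) *\<^sub>R z"
    have "z' \<in> T" using zS False by (simp add: T_def z'_def Ssc)
    hence "q z' \<le> r" using y0max by (simp add: r_def)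
    moreover have "q z = (norm z)^2 * q z'"
      using False by (simp add: z'_def qsc power2_eq_square)
    ultimately show ?thesis
      by (metis mult.commute mult_right_mono zero_le_power2)
  qed
  define N where "N z = r *\<^sub>R z - A *v z" for z
  define qN where "qN z = inner z (N z)" for z
  have qN_nonneg: "qN z \<ge> 0" if "z \<in> S" for z
    using bound[OF that] by (simp add: qN_def N_def q_def inner_diff_right power2_norm_eq_inner)
  have qN0: "qN y0 = 0"
    using ny0 by (simp add: qN_def N_def r_def q_def inner_diff_right power2_norm_eq_inner[symmetric])
  define w where "w = N y0"
  have wS: "w \<in> S"
  proof -
    have "cinner (f j) (A *v y0) = 0" if j: "j \<in> J" for j
    proof -
      have "cinner (f j) (A *v y0) = cinner (A *v f j) y0"
        using cinner_matrix[of "f j" A y0] herm by simp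
      also have "\<dots> = complex_of_real (l j) * cinner (f j) y0"
        using eig j by (simp add: cinner_scaleR_left)
      finally show ?thesis using y0S j by (simp add: S_def)
    qed
    thus ?thesis using y0S by (simp add: w_def N_def S_def cinner_diff_right cinner_scaleR_right)
  qed
  have Nsym: "inner a (N b) = inner (N a) b" for a b
  proof -
    have "inner a (A *v b) = inner (A *v a) b" using inner_matrix[of a A b] herm by simp
    thus ?thesis by (simp add: N_def inner_diff_left inner_diff_right)
  qed
  have Nlin: "N (a - t *\<^sub>R b) = N a - t *\<^sub>R N b" for a b t
    by (simp add: N_def matrix_vector_mult_diff_distrib mat_vec_scaleR algebra_simps)
  have expand: "qN (y0 - t *\<^sub>R w) = - 2 * t * (norm w)^2 + t^2 * qN w" for t
  proof -
    have "qN (y0 - t *\<^sub>R w) = qN y0 - t * inner y0 (N w) - t * inner w (N y0) + t^2 * qN w"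
      unfolding qN_def Nlin by (simp add: inner_diff_left inner_diff_right power2_eq_square algebra_simps)
    also have "inner y0 (N w) = inner w w" using Nsym[of y0 w] by (simp add: w_def inner_commute)
    also have "inner w (N y0) = inner w w" by (simp add: w_def)
    finally show ?thesis using qN0 by (simp add: power2_norm_eq_inner)
  qed
  have w0: "w = 0"
  proof (rule ccontr)
    assume "w \<noteq> 0"
    hence nw: "(norm w)^2 > 0" by simp
    have ge: "0 \<le> - 2 * t * (norm w)^2 + t^2 * qN w" for t
    proof -
      have "0 \<le> qN (y0 - t *\<^sub>R w)" by (rule qN_nonneg[OF Sdiff[OF y0S Ssc[OF wS]]])
      thus ?thesis using expand[of t] by linarith
    qed
    show False
    proof (cases "qN w \<le> 0")
      case True
      from ge[of 1] True nw show False by simp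
    next
      case False
      define t where "t = (norm w)^2 / qN w"
      have tpos: "t > 0" using False nw by (simp add: t_def)
      have "t^2 * qN w = t * (norm w)^2" using False by (simp add: t_def power2_eq_square)
      with ge[of t] have "0 \<le> - t * (norm w)^2" by simp
      moreover have "t * (norm w)^2 > 0" using tpos nw by (rule mult_pos_pos)
      ultimately show False by linarith
    qed
  qed
  hence "A *v y0 = r *\<^sub>R y0" by (simp add: w_def N_def)
  thus ?thesis using ny0 y0S by (auto simp: S_def)
qed

theorem spectral:
  fixes A :: "complex^'k^'k"
  assumes herm: "cadj A = A"
  shows "\<exists>(V::complex^'k^'k) l. cadj V ** V = mat 1 \<and> A = V ** diag_mat l ** cadj V"
proof -
  have "\<exists>f l. (\<forall>i\<in>J. \<forall>j\<in>J. cinner (f i) (f j) = (if i = j then 1 else 0))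
           \<and> (\<forall>j\<in>J. A *v f j = l j *\<^sub>R f j)" for J :: "'k set"
  proof (induction J rule: finite_induct[OF finite])
    case 1 thus ?case by auto
  next
    case (2 i J)
    then obtain f l where fl: "\<forall>a\<in>J. \<forall>b\<in>J. cinner (f a) (f b) = (if a = b then 1 else 0)"
      "\<forall>j\<in>J. A *v f j = l j *\<^sub>R f j" by blast
    have "card J < CARD('k)"
    proof -
      have "J \<subset> UNIV" using 2 by auto
      thus ?thesis by (simp add: psubset_card_mono)
    qed
    from eig_step[OF herm 2(1) this fl] obtain y r where
      y: "norm y = 1" "\<forall>j\<in>J. cinner (f j) y = 0" "A *v y = r *\<^sub>R y" by blast
    have yy: "cinner y y = 1" using y(1) by (simp add: cinner_self)
    have y2: "\<forall>j\<in>J. cinner y (f j) = 0" using y(2) cinner_cnj by (metis complex_cnj_zero)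
    define f' where "f' = f(i := y)"
    define l' where "l' = l(i := r)"
    have o: "cinner (f' a) (f' b) = (if a = b then 1 else 0)" if "a \<in> insert i J" "b \<in> insert i J" for a b
    proof (cases "a = i")
      case True
      thus ?thesis using that yy y2 2(2) by (cases "b = i") (auto simp: f'_def)
    next
      case False
      thus ?thesis using that y(2) fl(1) 2(2) by (cases "b = i") (auto simp: f'_def)
    qed
    have e: "A *v f' j = l' j *\<^sub>R f' j" if "j \<in> insert i J" for j
      using that fl(2) y(3) 2(2) by (cases "j = i") (auto simp: f'_def l'_def)
    show ?case using o e by blast
  qed
  from this[of UNIV] have "\<exists>(f::'k \<Rightarrow> complex^'k) l. (\<forall>i j. cinner (f i) (f j) = (if i = j then 1 else 0))
           \<and> (\<forall>j. A *v f j = l j *\<^sub>R f j)" by simp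
  then obtain f :: "'k \<Rightarrow> complex^'k" and l where f: "\<forall>i j. cinner (f i) (f j) = (if i = j then 1 else 0)"
    and e: "\<forall>j. A *v f j = l j *\<^sub>R f j" by blast
  define V where "V = mk_mat f"
  have "orthonormal_cols V" using f by (simp add: V_def orthonormal_mk_mat)
  hence VV: "cadj V ** V = mat 1" by (simp add: orthonormal_cols_def)
  have e': "(A *v f j) $ i = complex_of_real (l j) * (f j $ i)" for j i
    by (simp only: e vector_scaleR_component) (simp add: scaleR_conv_of_real)
  have "A ** V = V ** diag_mat l"
    by (simp add: V_def mult_mk_mat mk_mat_diag vec_eq_iff e')
  hence "A ** V ** cadj V = V ** diag_mat l ** cadj V" by simp
  hence "A = V ** diag_mat l ** cadj V"
    using unitary_right[OF VV] by (simp add: matrix_mul_assoc[symmetric])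
  thus ?thesis using VV by blast
qed



lemma diag_mat_vec: "(diag_mat d *v y) $ i = complex_of_real (d i) * y $ i"
  by (simp add: matrix_vector_mult_def if_distrib if_distribR cong: if_cong)

lemma norm_vec_sq: "(norm (z::complex^'n))^2 = (\<Sum>i\<in>UNIV. (cmod (z$i))^2)"
  by (simp add: norm_vec_def L2_set_def sum_nonneg)

lemma orth_cadj_square:
  fixes V :: "complex^'k^'k"
  assumes "cadj V ** V = mat 1" shows "orthonormal_cols (cadj V)"
  using unitary_right[OF assms] by (simp add: orthonormal_cols_def)

lemma trace_conj:
  fixes V :: "complex^'k^'k"
  assumes "cadj V ** V = mat 1"
  shows "trace (V ** M ** cadj V) = trace M"
proof -
  have "trace (V ** M ** cadj V) = trace (cadj V ** (V ** M))" by (rule trace_mul_sym)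
  also have "\<dots> = trace M" using assms by (simp add: matrix_mul_assoc)
  finally show ?thesis .
qed

lemma spec_quad_lower:
  fixes V :: "complex^'k^'k"
  assumes V: "cadj V ** V = mat 1" and m: "\<And>i. m \<le> d i"
  shows "m * (norm x)^2 \<le> inner x ((V ** diag_mat d ** cadj V) *v x)"
proof -
  define y where "y = cadj V *v x"
  have ny: "norm y = norm x" using orth_norm[OF orth_cadj_square[OF V]] by (simp add: y_def)
  have "inner x ((V ** diag_mat d ** cadj V) *v x) = inner x (V *v (diag_mat d *v y))"
    by (simp add: y_def matrix_vector_mul_assoc matrix_mul_assoc)
  also have "\<dots> = inner y (diag_mat d *v y)"
    by (simp add: inner_matrix y_def)
  also have "\<dots> = (\<Sum>i\<in>UNIV. d i * (cmod (y$i))^2)"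
  proof -
    have c: "(cmod z)^2 = Re z * Re z + Im z * Im z" for z
      using cmod_power2[of z] by (simp only: power2_eq_square)
    show ?thesis by (simp add: inner_vec_def diag_mat_vec inner_complex_def c algebra_simps)
  qed
  finally have eq: "inner x ((V ** diag_mat d ** cadj V) *v x) = (\<Sum>i\<in>UNIV. d i * (cmod (y$i))^2)" .
  have "m * (norm x)^2 = (\<Sum>i\<in>UNIV. m * (cmod (y$i))^2)"
    by (simp add: ny[symmetric] norm_vec_sq sum_distrib_left)
  also have "\<dots> \<le> (\<Sum>i\<in>UNIV. d i * (cmod (y$i))^2)"
    by (intro sum_mono mult_right_mono m) simp
  finally show ?thesis using eq by simp
qed

lemma spec_norm_upper:
  fixes V :: "complex^'k^'k"
  assumes V: "cadj V ** V = mat 1" and M: "\<And>i. \<bar>d i\<bar> \<le> M"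
  shows "norm ((V ** diag_mat d ** cadj V) *v x) \<le> M * norm x"
proof -
  define y where "y = cadj V *v x"
  have ny: "norm y = norm x" using orth_norm[OF orth_cadj_square[OF V]] by (simp add: y_def)
  have M0: "0 \<le> M" using M[of undefined] by linarith
  have "norm ((V ** diag_mat d ** cadj V) *v x) = norm (V *v (diag_mat d *v y))"
    by (simp add: y_def matrix_vector_mul_assoc matrix_mul_assoc)
  also have "\<dots> = norm (diag_mat d *v y)" using orth_norm V by (simp add: orthonormal_cols_def)
  finally have eq: "norm ((V ** diag_mat d ** cadj V) *v x) = norm (diag_mat d *v y)" .
  have "(norm (diag_mat d *v y))^2 = (\<Sum>i\<in>UNIV. (d i)^2 * (cmod (y$i))^2)"
    by (simp add: norm_vec_sq diag_mat_vec norm_mult power_mult_distrib)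
  also have "\<dots> \<le> (\<Sum>i\<in>UNIV. M^2 * (cmod (y$i))^2)"
  proof (intro sum_mono mult_right_mono)
    fix i show "(d i)^2 \<le> M^2" using M[of i] by (metis abs_le_square_iff abs_of_nonneg M0)
  qed simp
  also have "\<dots> = (M * norm x)^2"
    by (simp add: ny[symmetric] norm_vec_sq sum_distrib_left power_mult_distrib)
  finally have "(norm (diag_mat d *v y))^2 \<le> (M * norm x)^2" .
  hence "norm (diag_mat d *v y) \<le> M * norm x"
    using M0 by (meson norm_ge_zero power2_le_imp_le mult_nonneg_nonneg)
  thus ?thesis using eq by simp
qed

lemma mat_cancel: "A ** B = mat 1 \<Longrightarrow> A ** (B ** X) = X"
  by (simp add: matrix_mul_assoc)

lemma sqrt_unique:
  fixes L W V :: "complex^'k^'k"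
  assumes W: "cadj W ** W = mat 1" and LW: "L = W ** diag_mat e ** cadj W" and e: "\<And>i. e i \<ge> 0"
    and V: "cadj V ** V = mat 1" and LV: "cadj L ** L = V ** diag_mat (\<lambda>i. (d i)^2) ** cadj V"
    and d: "\<And>i. d i \<ge> 0"
  shows "L = V ** diag_mat d ** cadj V"
proof -
  have W': "W ** cadj W = mat 1" and V': "V ** cadj V = mat 1" using W V unitary_right by auto
  have "cadj L ** L = W ** diag_mat e ** (cadj W ** W) ** diag_mat e ** cadj W"
    by (simp add: LW cadj_mult matrix_mul_assoc)
  also have "\<dots> = W ** diag_mat (\<lambda>i. (e i)^2) ** cadj W"
    by (simp add: W matrix_mul_assoc[symmetric] diag_mult_diag power2_eq_square)
  finally have eq: "W ** diag_mat (\<lambda>i. (e i)^2) ** cadj W = V ** diag_mat (\<lambda>i. (d i)^2) ** cadj V"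
    using LV by simp
  define Q where "Q = cadj V ** W"
  have "Q ** diag_mat (\<lambda>i. (e i)^2) = cadj V ** (W ** diag_mat (\<lambda>i. (e i)^2) ** cadj W) ** W"
    by (simp add: Q_def matrix_mul_assoc[symmetric] W mat_cancel[OF W])
  also have "\<dots> = cadj V ** (V ** diag_mat (\<lambda>i. (d i)^2) ** cadj V) ** W" by (simp add: eq)
  also have "\<dots> = diag_mat (\<lambda>i. (d i)^2) ** Q"
    by (simp add: Q_def matrix_mul_assoc[symmetric] mat_cancel[OF V])
  finally have QE2: "Q ** diag_mat (\<lambda>i. (e i)^2) = diag_mat (\<lambda>i. (d i)^2) ** Q" .
  have QE: "Q ** diag_mat e = diag_mat d ** Q"
  proof -
    have "Q $ i $ j * e j = d i * Q $ i $ j" for i j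
    proof (cases "Q $ i $ j = 0")
      case True thus ?thesis by simp
    next
      case False
      have "Q $ i $ j * (e j)^2 = (d i)^2 * Q $ i $ j"
        using arg_cong[OF QE2, of "\<lambda>M. M $ i $ j"] by (simp add: mult_diag_right mult_diag_left)
      hence "complex_of_real ((e j)^2) = complex_of_real ((d i)^2)" using False by (simp add: mult.commute)
      hence "(e j)^2 = (d i)^2" by (simp only: of_real_eq_iff)
      hence "e j = d i" using e d by (metis power2_eq_iff_nonneg)
      thus ?thesis by (simp add: mult.commute)
    qed
    thus ?thesis by (simp add: vec_eq_iff mult_diag_right mult_diag_left)
  qed
  have "cadj V ** L = Q ** diag_mat e ** cadj W"
    by (simp add: LW Q_def matrix_mul_assoc[symmetric])
  also have "\<dots> = diag_mat d ** Q ** cadj W" by (simp add: QE)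
  also have "\<dots> = diag_mat d ** cadj V"
    by (simp add: Q_def matrix_mul_assoc[symmetric] mat_cancel[OF W'] W')
  finally have "V ** (cadj V ** L) = V ** diag_mat d ** cadj V"
    by (simp add: matrix_mul_assoc)
  thus ?thesis by (simp add: mat_cancel[OF V'])
qed



lemma cadj_herm_AA: "cadj (cadj A ** A) = cadj A ** A"
  by (simp add: cadj_mult)

lemma svd_exists:
  fixes A :: "complex^'k^'n"
  assumes kn: "CARD('k) \<le> CARD('n)"
  shows "\<exists>U s V. is_svd A U s V"
proof -
  obtain V :: "complex^'k^'k" and l where V: "cadj V ** V = mat 1"
    and H: "cadj A ** A = V ** diag_mat l ** cadj V"
    using spectral[OF cadj_herm_AA[of A]] by blast
  have V': "V ** cadj V = mat 1" using unitary_right[OF V] .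
  define a where "a = (\<lambda>i. A *v column i V)"
  have AV: "A ** V = mk_mat a"
  proof -
    have "A ** V = A ** mk_mat (\<lambda>c. column c V)" by (simp only: mk_mat_column)
    also have "\<dots> = mk_mat a" by (simp add: mult_mk_mat a_def)
    finally show ?thesis .
  qed
  have "cadj V ** (cadj A ** A) ** V = diag_mat l"
    by (simp add: H matrix_mul_assoc[symmetric] mat_cancel[OF V] V)
  moreover have "cadj V ** (cadj A ** A) ** V = cadj (A ** V) ** (A ** V)"
    by (simp add: cadj_mult matrix_mul_assoc)
  ultimately have G: "cadj (mk_mat a) ** mk_mat a = diag_mat l" using AV by simp
  have aa: "cinner (a i) (a j) = (if i = j then complex_of_real (l i) else 0)" for i j
    using arg_cong[OF G, of "\<lambda>M. M $ i $ j"] by (simp add: cadj_mk_mat_mult)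
  define s where "s i = norm (a i)" for i
  have ls: "l i = (s i)^2" for i
  proof -
    have "cinner (a i) (a i) = complex_of_real (l i)" using aa[of i i] by simp
    hence "complex_of_real ((norm (a i))^2) = complex_of_real (l i)" by (simp only: cinner_self)
    hence "(norm (a i))^2 = l i" by (simp only: of_real_eq_iff)
    thus ?thesis by (simp add: s_def)
  qed
  define J where "J = {i. s i \<noteq> 0}"
  define u where "u i = (1 / s i) *\<^sub>R a i" for i
  have uorth: "\<forall>i\<in>J. \<forall>j\<in>J. cinner (u i) (u j) = (if i = j then 1 else 0)"
  proof (intro ballI)
    fix i j assume i: "i \<in> J" and j: "j \<in> J"
    show "cinner (u i) (u j) = (if i = j then 1 else 0)"
      using i j by (auto simp: u_def cinner_scaleR_left cinner_scaleR_right aa ls J_def power2_eq_square)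
  qed
  obtain u' where u': "\<forall>i\<in>J. u' i = u i" "\<forall>i j. cinner (u' i) (u' j) = (if i = j then 1 else 0)"
    using orth_extend[OF kn uorth] by blast
  define U where "U = mk_mat u'"
  have U: "orthonormal_cols U" using u'(2) by (simp add: U_def orthonormal_mk_mat)
  have col: "complex_of_real (s c) *s u' c = a c" for c
  proof (cases "c \<in> J")
    case True
    hence "s c \<noteq> 0" by (simp add: J_def)
    thus ?thesis using True u'(1)
    proof -
      have "\<forall>i. (1 / s c) *\<^sub>R (complex_of_real (s c) * a c $ i) = a c $ i"
        using \<open>s c \<noteq> 0\<close> by (simp add: scaleR_conv_of_real)
      thus ?thesis using True u'(1) by (simp add: u_def vec_eq_iff)
    qed
  next
    case False
    hence "s c = 0" by (simp add: J_def)
    hence "a c = 0" by (simp add: s_def)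
    thus ?thesis using \<open>s c = 0\<close> by (simp add: vec_eq_iff)
  qed
  have "U ** diag_mat s = A ** V"
    by (simp add: U_def AV mk_mat_diag col)
  hence "U ** diag_mat s ** cadj V = A"
    by (simp add: matrix_mul_assoc[symmetric] V')
  moreover have "orthonormal_cols V" using V by (simp add: orthonormal_cols_def)
  moreover have "\<forall>i. 0 \<le> s i" by (simp add: s_def)
  ultimately show ?thesis using U unfolding is_svd_def by metis
qed

lemma singular_values_some:
  assumes "\<exists>U s V. is_svd A U s V"
  shows "\<exists>U s V. is_svd A U s V \<and> singular_values A = image_mset s (mset_set UNIV)"
proof -
  have "\<exists>M. \<exists>U s V. is_svd A U s V \<and> M = image_mset s (mset_set UNIV)" using assms by blast
  from someI_ex[OF this] show ?thesis unfolding singular_values_def by blast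
qed

lemma sum_mset_sv: "sum_mset (image_mset f (image_mset s (mset_set (UNIV::'k::finite set)))) = (\<Sum>i\<in>UNIV. f (s i))"
  by (simp add: sum_unfold_sum_mset multiset.map_comp comp_def)

lemma sum_mset_sv0: "sum_mset (image_mset s (mset_set (UNIV::'k::finite set))) = (\<Sum>i\<in>UNIV. s i)"
  by (simp add: sum_unfold_sum_mset)

lemma set_mset_sv: "set_mset (image_mset s (mset_set (UNIV::'k::finite set))) = range s"
  by simp

lemma svd_AA:
  assumes "is_svd A U s V"
  shows "cadj A ** A = V ** diag_mat (\<lambda>i. (s i)^2) ** cadj V"
proof -
  have U: "cadj U ** U = mat 1" using assms by (simp add: is_svd_def orthonormal_cols_def)
  have "cadj A ** A = V ** diag_mat s ** (cadj U ** U) ** diag_mat s ** cadj V"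
    using assms by (simp add: is_svd_def cadj_mult matrix_mul_assoc)
  thus ?thesis by (simp add: U matrix_mul_assoc[symmetric] diag_mult_diag power2_eq_square)
qed

lemma svd_V: "is_svd A U s V \<Longrightarrow> cadj V ** V = mat 1"
  by (simp add: is_svd_def orthonormal_cols_def)

lemma svd_norm_sq:
  assumes "is_svd A U s V"
  shows "(norm A)^2 = (\<Sum>i\<in>UNIV. (s i)^2)"
proof -
  have "(norm A)^2 = Re (trace (cadj A ** A))" by (simp add: power2_norm_eq_inner inner_mat_trace)
  also have "\<dots> = Re (trace (diag_mat (\<lambda>i. (s i)^2)))"
    by (simp add: svd_AA[OF assms] trace_conj[OF svd_V[OF assms]])
  finally show ?thesis by (simp add: trace_diag)
qed

lemma svd_col:
  assumes "is_svd A U s V"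
  shows "A *v column i V = complex_of_real (s i) *s column i U"
proof -
  have "A ** V = U ** diag_mat s"
    using assms by (simp add: is_svd_def matrix_mul_assoc[symmetric] mat_cancel[OF svd_V[OF assms]] svd_V[OF assms])
  hence "A *v column i V = column i (U ** diag_mat s)" by (metis column_mult)
  thus ?thesis by (simp add: column_mult column_def vec_eq_iff mult_diag_right mult.commute)
qed

lemma orth_col_norm:
  assumes "orthonormal_cols U" shows "norm (column i U) = 1"
proof -
  have "cinner (column i U) (column i U) = 1"
    using arg_cong[OF assms[unfolded orthonormal_cols_def], of "\<lambda>M. M $ i $ i"]
    by (simp add: matrix_matrix_mult_def cinner_def column_def mat_def)
  hence "complex_of_real ((norm (column i U))^2) = complex_of_real 1" by (simp only: cinner_self of_real_1)
  hence "(norm (column i U))^2 = 1" by (simp only: of_real_eq_iff)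
  thus ?thesis by (simp add: power2_eq_1_iff) (metis norm_ge_zero neg_0_le_iff_le le_minus_one_simps(3))
qed

lemma norm_smult_vec: "norm (c *s (x::complex^'n)) = cmod c * norm x"
proof -
  have "(norm (c *s x))^2 = (cmod c * norm x)^2"
    by (simp add: norm_vec_sq norm_mult power_mult_distrib sum_distrib_left)
  thus ?thesis by (simp add: power2_eq_iff_nonneg)
qed

lemma svd_contraction:
  assumes "is_svd A U s V" and c: "\<And>x. norm (A *v x) \<le> norm x"
  shows "s i \<le> 1"
proof -
  have U: "orthonormal_cols U" and V: "orthonormal_cols V" and s: "s i \<ge> 0"
    using assms(1) by (auto simp: is_svd_def)
  have "norm (A *v column i V) = s i"
    using svd_col[OF assms(1)] orth_col_norm[OF U] s by (simp add: norm_smult_vec)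
  thus ?thesis using c[of "column i V"] orth_col_norm[OF V] by simp
qed



lemma matrix_sub_rdistrib: "((A::complex^'m^'n) - B) ** C = A ** C - B ** C"
  by (simp add: vec_eq_iff matrix_matrix_mult_def sum_subtractf algebra_simps)

lemma matrix_sub_ldistrib: "(A::complex^'m^'n) ** (B - C) = A ** B - A ** C"
  by (simp add: vec_eq_iff matrix_matrix_mult_def sum_subtractf algebra_simps)

lemma matrix_add_rdistrib': "((A::complex^'m^'n) + B) ** C = A ** C + B ** C"
  by (simp add: vec_eq_iff matrix_matrix_mult_def sum.distrib algebra_simps)

lemma column_diff: "column j (A - B) = column j A - column j B"
  by (simp add: column_def vec_eq_iff)

lemma Re_trace_cadj: "Re (trace (cadj A)) = Re (trace A)"
  by (simp add: trace_cadj)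

lemma orth_norm_sq:
  fixes Q :: "complex^'k^'n"
  assumes "orthonormal_cols Q" shows "(norm Q)^2 = real CARD('k)"
  by (simp add: norm_sq_columns orth_col_norm[OF assms])

lemma orth_mult_norm:
  assumes "orthonormal_cols Q" shows "norm (Q ** Y) = norm Y"
proof -
  have "(norm (Q ** Y))^2 = (norm Y)^2"
    by (simp add: norm_sq_columns column_mult orth_norm[OF assms])
  thus ?thesis by (simp add: power2_eq_iff_nonneg)
qed

lemma proj_norm:
  assumes Q: "orthonormal_cols Q"
  shows "(norm (Y - Q ** (cadj Q ** Y)))^2 = (norm Y)^2 - (norm (cadj Q ** Y))^2"
proof -
  have "(norm (Y - Q ** (cadj Q ** Y)))^2 =
     (\<Sum>j\<in>UNIV. (norm (column j Y - Q *v (cadj Q *v column j Y)))^2)"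
    by (simp add: norm_sq_columns column_diff column_mult)
  also have "\<dots> = (\<Sum>j\<in>UNIV. (norm (column j Y))^2 - (norm (cadj Q *v column j Y))^2)"
    by (simp add: bessel[OF Q])
  also have "\<dots> = (norm Y)^2 - (norm (cadj Q ** Y))^2"
    by (simp add: sum_subtractf norm_sq_columns column_mult)
  finally show ?thesis .
qed

lemma entry_form: "(cadj X ** (M ** Y)) $ i $ j = cinner (column i X) (M *v column j Y)"
proof -
  have "cadj X ** (M ** Y) = cadj (mk_mat (\<lambda>c. column c X)) ** (M ** mk_mat (\<lambda>c. column c Y))"
    by (simp only: mk_mat_column)
  also have "\<dots> = cadj (mk_mat (\<lambda>c. column c X)) ** mk_mat (\<lambda>c. M *v column c Y)"
    by (simp only: mult_mk_mat)
  finally show ?thesis by (simp add: cadj_mk_mat_mult)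
qed

lemma psd_spec:
  fixes L :: "complex^'k^'k"
  assumes "pos_semidef L"
  shows "\<exists>(W::complex^'k^'k) e. cadj W ** W = mat 1 \<and> L = W ** diag_mat e ** cadj W \<and> (\<forall>i. e i \<ge> 0)"
proof -
  have h: "cadj L = L" using assms by (simp add: pos_semidef_def hermitian_def)
  obtain W :: "complex^'k^'k" and e where W: "cadj W ** W = mat 1" and LW: "L = W ** diag_mat e ** cadj W"
    using spectral[OF h] by blast
  have "cadj W ** (L ** W) = diag_mat e"
    by (simp add: LW matrix_mul_assoc[symmetric] mat_cancel[OF W] W)
  hence "cinner (column i W) (L *v column i W) = complex_of_real (e i)" for i
    using entry_form[of W L W i i] by simp
  moreover have "Re (cinner x (L *v x)) \<ge> 0" for x using assms by (simp add: pos_semidef_def)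
  ultimately have "e i \<ge> 0" for i by (metis Re_complex_of_real)
  thus ?thesis using W LW by blast
qed

lemma cadj_neg_diff: "norm (A - B) = norm (B - A)"
  by (rule norm_minus_commute)



lemma rank_facts:
  fixes B :: "complex^'k^'n"
  assumes "rank B = CARD('k)"
  shows "CARD('k) \<le> CARD('n)" and "\<exists>L. L ** B = mat 1"
proof -
  have r: "vec.dim (rows B) = CARD('k)" using assms by (simp add: row_rank_def_gen)
  have rr: "rows B = range (\<lambda>i. row i B)" by (auto simp: rows_def)
  have "vec.dim (rows B) \<le> card (rows B)"
    by (rule vec.dim_le_card[OF vec.span_superset]) (simp add: rr)
  also have "card (rows B) \<le> CARD('n)"
    by (simp add: rr card_image_le)
  finally show "CARD('k) \<le> CARD('n)" using r by simp
  have "vec.span (rows B) = UNIV"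
    using r by (metis vec.dim_eq_full vec_dim_card vec.dim_UNIV vec.dimension_def)
  thus "\<exists>L. L ** B = mat 1" using matrix_left_invertible_span_rows_gen by blast
qed

lemma minmax_sv:
  fixes s :: "'k::finite \<Rightarrow> real"
  shows "Min (range s) \<le> s i" "s i \<le> Max (range s)"
  by auto



theorem theorem4p3:
  fixes B P Ps :: "complex^'k^'n"
  assumes rankB: "rank B = CARD('k)"
    and Ps: "orth_polar_factor Ps B"
    and P: "orthonormal_cols P"
  defines "\<eta> \<equiv> trace_norm B - Re (trace (cadj P ** B))"
  defines "\<epsilon> \<equiv> sqrt (2 * \<eta> / sigma_min B)"
  shows "(frob_norm (B - P ** (cadj P ** B)) / sigma_max B \<le> sin_theta_F P Ps
           \<and> sin_theta_F P Ps \<le> \<epsilon>)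
         \<and> (pos_def (cadj P ** B) \<longrightarrow>
           frob_norm (P - Ps) \<le> (1 + 2 * sigma_max B / (sigma_min B + sigma_min (cadj P ** B))) * \<epsilon>)
         \<and> (col_space P = col_space Ps \<longrightarrow> frob_norm (P - Ps) \<le> \<epsilon>)"
proof -
  have kn: "CARD('k) \<le> CARD('n)" using rank_facts(1)[OF rankB] .
  obtain Linv where Linv: "Linv ** B = mat 1" using rank_facts(2)[OF rankB] by blast
  have PsO: "orthonormal_cols Ps" using Ps by (simp add: orth_polar_factor_def)
  obtain Lam where Lpsd: "pos_semidef Lam" and BL: "B = Ps ** Lam"
    using Ps by (auto simp: orth_polar_factor_def)
  have Lh: "cadj Lam = Lam" using Lpsd by (simp add: pos_semidef_def hermitian_def)
  have PsPs: "cadj Ps ** Ps = mat 1" using PsO by (simp add: orthonormal_cols_def)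
  have PP: "cadj P ** P = mat 1" using P by (simp add: orthonormal_cols_def)
  obtain UB sB VB where svdB: "is_svd B UB sB VB" and svB: "singular_values B = image_mset sB (mset_set UNIV)"
    using singular_values_some[OF svd_exists[OF kn]] by blast
  have sB0: "\<And>i. sB i \<ge> 0" using svdB by (simp add: is_svd_def)
  define smin where "smin = Min (range sB)"
  define smax where "smax = Max (range sB)"
  have smin_eq: "sigma_min B = smin" by (simp add: sigma_min_def svB smin_def)
  have smax_eq: "sigma_max B = smax" by (simp add: sigma_max_def svB smax_def)
  have tn_eq: "trace_norm B = (\<Sum>i\<in>UNIV. sB i)" by (simp add: trace_norm_def svB sum_mset_sv0)
  have smin_le: "\<And>i. smin \<le> sB i" and smax_ge: "\<And>i. sB i \<le> smax"
    by (auto simp: smin_def smax_def)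
  have smax0: "smax \<ge> 0" using sB0 smax_ge order_trans by blast
  have VB: "cadj VB ** VB = mat 1" using svd_V[OF svdB] .
  obtain W :: "complex^'k^'k" and e where W: "cadj W ** W = mat 1" and LW: "Lam = W ** diag_mat e ** cadj W" and e0: "\<forall>i. e i \<ge> 0"
    using psd_spec[OF Lpsd] by blast
  have "cadj Lam ** Lam = cadj B ** B"
    by (simp add: BL cadj_mult matrix_mul_assoc[symmetric] mat_cancel[OF PsPs])
  also have "\<dots> = VB ** diag_mat (\<lambda>i. (sB i)^2) ** cadj VB" by (rule svd_AA[OF svdB])
  finally have LL: "cadj Lam ** Lam = VB ** diag_mat (\<lambda>i. (sB i)^2) ** cadj VB" .
  have LamV: "Lam = VB ** diag_mat sB ** cadj VB"
    by (rule sqrt_unique[OF W LW _ VB LL]) (simp_all add: e0 sB0)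
  have Llow: "\<And>x. smin * (norm x)^2 \<le> inner x (Lam *v x)"
    unfolding LamV by (rule spec_quad_lower[OF VB smin_le])
  have Lup: "\<And>x. norm (Lam *v x) \<le> smax * norm x"
    unfolding LamV by (rule spec_norm_upper[OF VB]) (simp add: abs_of_nonneg sB0 smax_ge)
  have Ltr: "Re (trace Lam) = (\<Sum>i\<in>UNIV. sB i)"
    unfolding LamV by (simp add: trace_conj[OF VB] trace_diag)
  have smin_pos: "smin > 0"
  proof (rule ccontr)
    assume "\<not> smin > 0"
    have "smin \<in> range sB" unfolding smin_def by (rule Min_in) auto
    then obtain i where i: "smin = sB i" by blast
    with \<open>\<not> smin > 0\<close> sB0[of i] have "sB i = 0" by simp
    hence "B *v column i VB = 0" using svd_col[OF svdB, of i] by simp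
    hence "Linv *v (B *v column i VB) = 0" by simp
    hence "column i VB = 0" by (simp add: matrix_vector_mul_assoc Linv)
    moreover have "norm (column i VB) = 1" using svdB orth_col_norm by (auto simp: is_svd_def)
    ultimately show False by simp
  qed
  define G where "G = cadj P ** Ps"
  obtain UG sG VG where svdG: "is_svd G UG sG VG" and svG: "singular_values G = image_mset sG (mset_set UNIV)"
    using singular_values_some[OF svd_exists[OF order_refl]] by blast
  have Gc: "norm (G *v x) \<le> norm x" for x
  proof -
    have "norm (G *v x) = norm (cadj P *v (Ps *v x))" by (simp add: G_def matrix_vector_mul_assoc)
    also have "\<dots> \<le> norm (Ps *v x)" by (rule bessel_le[OF P])
    also have "\<dots> = norm x" by (rule orth_norm[OF PsO])
    finally show ?thesis .
  qed
  have sG1: "sG i \<le> 1" for i by (rule svd_contraction[OF svdG Gc])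
  have sG0: "sG i \<ge> 0" for i using svdG by (simp add: is_svd_def)
  define S2 where "S2 = real CARD('k) - (norm G)^2"
  have sin_sq: "sin_theta_F P Ps = sqrt S2"
  proof -
    have "sin_theta_F P Ps = sqrt (\<Sum>i\<in>UNIV. (sin (arccos (sG i)))^2)"
      by (simp add: sin_theta_F_def G_def[symmetric] svG sum_mset_sv)
    also have "(\<Sum>i\<in>UNIV. (sin (arccos (sG i)))^2) = (\<Sum>i\<in>UNIV. 1 - (sG i)^2)"
    proof (rule sum.cong[OF refl])
      fix i
      have "-1 \<le> sG i" "sG i \<le> 1" using sG0[of i] sG1[of i] by auto
      moreover have "(sG i)^2 \<le> 1" using sG0[of i] sG1[of i] by (simp add: power_le_one)
      ultimately show "(sin (arccos (sG i)))^2 = 1 - (sG i)^2" by (simp add: sin_arccos)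
    qed
    also have "\<dots> = S2" by (simp add: S2_def sum_subtractf svd_norm_sq[OF svdG])
    finally show ?thesis .
  qed
  define W1 where "W1 = Ps - P ** G"
  have W1n: "(norm W1)^2 = S2"
    using proj_norm[OF P, of Ps] orth_norm_sq[OF PsO] by (simp add: W1_def G_def S2_def)
  have S20: "S2 \<ge> 0" using W1n by (metis zero_le_power2)
  have sin_eq: "sin_theta_F P Ps = norm W1" using sin_sq W1n by (metis norm_ge_zero real_sqrt_unique)
  have resid: "B - P ** (cadj P ** B) = W1 ** Lam"
    by (simp add: W1_def G_def BL matrix_sub_rdistrib matrix_mul_assoc)
  have resid_bd: "norm (W1 ** Lam) \<le> smax * norm W1"
    by (rule row_bound_norm[OF smax0]) (simp add: Lh Lup)
  have a1: "frob_norm (B - P ** (cadj P ** B)) / sigma_max B \<le> sin_theta_F P Ps"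
  proof (cases "smax = 0")
    case True thus ?thesis by (simp add: smax_eq sin_eq)
  next
    case False
    hence "smax > 0" using smax0 by simp
    thus ?thesis using resid_bd by (simp add: frob_norm_eq resid smax_eq sin_eq divide_le_eq mult.commute)
  qed
  have cG: "cadj G = cadj Ps ** P" by (simp add: G_def cadj_mult)
  have cW: "cadj W1 ** W1 = mat 1 - cadj G ** G"
  proof -
    have e1: "cadj Ps ** (P ** G) = cadj G ** G" by (simp add: cG matrix_mul_assoc)
    have e2: "cadj G ** cadj P ** Ps = cadj G ** G" by (simp add: G_def matrix_mul_assoc[symmetric])
    have e3: "cadj G ** cadj P ** (P ** G) = cadj G ** G"
      by (simp add: matrix_mul_assoc[symmetric] mat_cancel[OF PP])
    have "cadj W1 ** W1 = cadj Ps ** Ps - cadj Ps ** (P ** G) - (cadj G ** cadj P ** Ps - cadj G ** cadj P ** (P ** G))"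
      by (simp add: W1_def cadj_diff cadj_mult matrix_sub_ldistrib matrix_sub_rdistrib)
    also have "\<dots> = mat 1 - cadj G ** G" by (simp add: e1 e2 e3 PsPs)
    finally show ?thesis .
  qed
  define f where "f M = Re (trace (M ** Lam))" for M :: "complex^'k^'k"
  have f_add: "f (A + C) = f A + f C" for A C by (simp add: f_def matrix_add_rdistrib' trace_add)
  have f_sub: "f (A - C) = f A - f C" for A C by (simp add: f_def matrix_sub_rdistrib trace_sub)
  have f_I: "f (mat 1) = (\<Sum>i\<in>UNIV. sB i)" by (simp add: f_def Ltr)
  have f_cG: "f (cadj G) = f G"
  proof -
    have "f (cadj G) = Re (trace (cadj (Lam ** G)))" by (simp add: f_def cadj_mult Lh)
    also have "\<dots> = Re (trace (Lam ** G))" by (rule Re_trace_cadj)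
    also have "\<dots> = f G" unfolding f_def by (subst trace_mul_sym) (rule refl)
    finally show ?thesis .
  qed
  have f_inner: "f (cadj X ** X) = inner X (X ** Lam)" for X :: "complex^'k^'k"
    by (simp add: f_def inner_mat_trace matrix_mul_assoc)
  have f_innerW: "f (cadj W1 ** W1) = inner W1 (W1 ** Lam)"
    by (simp add: f_def inner_mat_trace matrix_mul_assoc)
  define X1 where "X1 = mat 1 - G"
  have cX: "cadj X1 ** X1 = mat 1 - G - cadj G + cadj G ** G"
    by (simp add: X1_def cadj_diff matrix_sub_ldistrib matrix_sub_rdistrib algebra_simps)
  have eta_eq: "\<eta> = (\<Sum>i\<in>UNIV. sB i) - f G"
    unfolding \<eta>_def tn_eq by (simp add: f_def BL G_def matrix_mul_assoc)
  have two_eta: "2 * \<eta> = inner X1 (X1 ** Lam) + inner W1 (W1 ** Lam)"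
  proof -
    have "inner X1 (X1 ** Lam) + inner W1 (W1 ** Lam) = f (cadj X1 ** X1) + f (cadj W1 ** W1)"
      by (simp add: f_inner f_innerW)
    also have "\<dots> = 2 * \<eta>"
      by (simp add: cX cW f_add f_sub f_I f_cG eta_eq)
    finally show ?thesis by simp
  qed
  have lowX: "smin * (norm X)^2 \<le> inner X (X ** Lam)" for X :: "complex^'k^'k"
    by (rule row_bound_lower[OF Lh Llow])
  have lowW: "smin * (norm W1)^2 \<le> inner W1 (W1 ** Lam)"
    by (rule row_bound_lower[OF Lh Llow])
  have X1nn: "0 \<le> smin * (norm X1)^2" using smin_pos by simp
  have S2le: "smin * S2 \<le> 2 * \<eta>"
  proof -
    have "smin * S2 = smin * (norm W1)^2" using W1n by simp
    thus ?thesis using two_eta lowX[of X1] lowW X1nn by linarith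
  qed
  have S2le': "S2 \<le> 2 * \<eta> / smin"
    using S2le smin_pos by (simp add: pos_le_divide_eq mult.commute)
  have a2: "sin_theta_F P Ps \<le> \<epsilon>"
    unfolding sin_sq \<epsilon>_def smin_eq using S2le' by (rule real_sqrt_le_mono)
  have Wadj_c: "norm (cadj W1 *v y) \<le> 1 * norm y" for y
  proof -
    have "cadj W1 *v y = cadj Ps *v (y - P *v (cadj P *v y))"
      by (simp add: W1_def cadj_diff cadj_mult cG matrix_vector_mult_diff_distrib matrix_vector_mult_diff_rdistrib
          matrix_vector_mul_assoc matrix_mul_assoc)
    hence "norm (cadj W1 *v y) \<le> norm (y - P *v (cadj P *v y))" using bessel_le[OF PsO] by simp
    also have "\<dots> \<le> norm y"
    proof -
      have "(norm (y - P *v (cadj P *v y)))^2 \<le> (norm y)^2" using bessel[OF P, of y] by simp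
      thus ?thesis using norm_ge_zero power2_le_imp_le by blast
    qed
    finally show ?thesis by simp
  qed
  have PsC: "(norm (P - Ps ** cadj G))^2 = S2"
    using proj_norm[OF PsO, of P] orth_norm_sq[OF P] by (simp add: cG[symmetric] norm_cadj S2_def)
  have PsCn: "norm (P - Ps ** cadj G) = norm W1"
    using PsC W1n by (metis norm_ge_zero power2_eq_iff_nonneg)
  have W1eps: "norm W1 \<le> \<epsilon>" using a2 sin_eq by simp
  have b: "pos_def (cadj P ** B) \<longrightarrow>
           frob_norm (P - Ps) \<le> (1 + 2 * sigma_max B / (sigma_min B + sigma_min (cadj P ** B))) * \<epsilon>"
  proof
    assume pd: "pos_def (cadj P ** B)"
    define M where "M = cadj P ** B"
    have MG: "M = G ** Lam" by (simp add: M_def G_def BL matrix_mul_assoc)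
    have Mh: "cadj M = M" using pd by (simp add: M_def pos_def_def hermitian_def)
    have Mpsd: "pos_semidef M"
    proof -
      have "Re (cinner x (M *v x)) \<ge> 0" for x
        using pd by (cases "x = 0") (auto simp: M_def pos_def_def less_imp_le)
      thus ?thesis using Mh by (simp add: pos_semidef_def hermitian_def)
    qed
    obtain UM sM VM where svdM: "is_svd M UM sM VM" and svM: "singular_values M = image_mset sM (mset_set UNIV)"
      using singular_values_some[OF svd_exists[OF order_refl]] by blast
    have sM0: "\<And>i. sM i \<ge> 0" using svdM by (simp add: is_svd_def)
    define smM where "smM = Min (range sM)"
    have smM_eq: "sigma_min (cadj P ** B) = smM" by (simp add: sigma_min_def svM smM_def M_def[symmetric])
    have smM_le: "\<And>i. smM \<le> sM i" by (auto simp: smM_def)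
    have smM0: "smM \<ge> 0"
    proof -
      have "smM \<in> range sM" unfolding smM_def by (rule Min_in) auto
      thus ?thesis using sM0 by auto
    qed
    have VM: "cadj VM ** VM = mat 1" using svd_V[OF svdM] .
    obtain W2 :: "complex^'k^'k" and e2 where W2: "cadj W2 ** W2 = mat 1"
      and MW: "M = W2 ** diag_mat e2 ** cadj W2" and e20: "\<forall>i. e2 i \<ge> 0"
      using psd_spec[OF Mpsd] by blast
    have MV: "M = VM ** diag_mat sM ** cadj VM"
      by (rule sqrt_unique[OF W2 MW _ VM svd_AA[OF svdM]]) (simp_all add: e20 sM0)
    have Mlow: "\<And>x. smM * (norm x)^2 \<le> inner x (M *v x)"
      unfolding MV by (rule spec_quad_lower[OF VM smM_le])
    define C where "C = cadj G"
    define X where "X = mat 1 - C"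
    have MC: "M = Lam ** C"
    proof -
      have "M = cadj M" using Mh by simp
      also have "\<dots> = Lam ** C" by (simp add: MG cadj_mult Lh C_def)
      finally show ?thesis .
    qed
    have syl: "Lam ** X + X ** M = cadj W1 ** W1 ** Lam"
    proof -
      have "Lam ** X = Lam - M" by (simp add: X_def matrix_sub_ldistrib MC)
      moreover have "X ** M = M - (C ** G) ** Lam"
        by (simp add: X_def matrix_sub_rdistrib MG matrix_mul_assoc)
      moreover have "cadj W1 ** W1 ** Lam = Lam - (C ** G) ** Lam"
        by (simp add: cW matrix_sub_rdistrib C_def)
      ultimately show ?thesis by simp
    qed
    have lo: "(smin + smM) * (norm X)^2 \<le> inner X (cadj W1 ** W1 ** Lam)"
    proof -
      have "smin * (norm X)^2 \<le> inner X (Lam ** X)" by (rule col_bound_lower[OF Llow])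
      moreover have "smM * (norm X)^2 \<le> inner X (X ** M)" by (rule row_bound_lower[OF Mh Mlow])
      ultimately show ?thesis by (simp add: syl[symmetric] inner_add_right algebra_simps)
    qed
    have up: "inner X (cadj W1 ** W1 ** Lam) \<le> norm X * (smax * norm W1)"
    proof -
      have "inner X (cadj W1 ** W1 ** Lam) \<le> norm X * norm (cadj W1 ** W1 ** Lam)"
        by (rule norm_cauchy_schwarz)
      also have "norm (cadj W1 ** W1 ** Lam) \<le> smax * norm (cadj W1 ** W1)"
        by (rule row_bound_norm[OF smax0]) (simp add: Lh Lup)
      also have "norm (cadj W1 ** W1) \<le> 1 * norm W1"
        by (rule col_bound_norm[OF _ Wadj_c]) simp
      finally show ?thesis using smax0 by (simp add: mult_left_mono)
    qed
    have spos: "smin + smM > 0" using smin_pos smM0 by simp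
    have Xb: "norm X \<le> smax * norm W1 / (smin + smM)"
    proof (cases "norm X = 0")
      case True thus ?thesis using smax0 spos by simp
    next
      case False
      hence nx: "norm X > 0" by simp
      have "norm X * ((smin + smM) * norm X) \<le> norm X * (smax * norm W1)"
        using lo up by (simp add: power2_eq_square algebra_simps)
      hence "(smin + smM) * norm X \<le> smax * norm W1" using nx by simp
      thus ?thesis using spos by (simp add: pos_le_divide_eq mult.commute)
    qed
    have PmPs: "P - Ps = (P - Ps ** cadj G) - Ps ** X"
      by (simp add: X_def C_def matrix_sub_ldistrib)
    have "norm (P - Ps) \<le> norm (P - Ps ** cadj G) + norm (Ps ** X)"
      unfolding PmPs by (rule norm_triangle_ineq4)
    also have "\<dots> = norm W1 + norm X" by (simp add: PsCn orth_mult_norm[OF PsO])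
    also have "\<dots> \<le> norm W1 + smax * norm W1 / (smin + smM)" using Xb by simp
    also have "\<dots> = (1 + smax / (smin + smM)) * norm W1" by (simp add: algebra_simps)
    also have "\<dots> \<le> (1 + 2 * smax / (smin + smM)) * \<epsilon>"
    proof (rule mult_mono)
      show "1 + smax / (smin + smM) \<le> 1 + 2 * smax / (smin + smM)"
        using smax0 spos by (simp add: divide_right_mono)
      show "0 \<le> 1 + 2 * smax / (smin + smM)" using smax0 spos by simp
    qed (simp_all add: W1eps)
    finally show "frob_norm (P - Ps) \<le> (1 + 2 * sigma_max B / (sigma_min B + sigma_min (cadj P ** B))) * \<epsilon>"
      by (simp add: frob_norm_eq smax_eq smin_eq smM_eq)
  qed
  have c: "col_space P = col_space Ps \<longrightarrow> frob_norm (P - Ps) \<le> \<epsilon>"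
  proof
    assume cs: "col_space P = col_space Ps"
    define C where "C = cadj Ps ** P"
    have colP: "column j P = P *v axis j 1" for j
      by (simp add: column_def vec_eq_iff matrix_vector_mult_def axis_def if_distrib if_distribR cong: if_cong)
    have PC: "P = Ps ** C"
    proof -
      have "column j (Ps ** C) = column j P" for j
      proof -
        have "P *v axis j 1 \<in> col_space Ps" using cs by (auto simp: col_space_def)
        then obtain v where v: "P *v axis j 1 = Ps *v v" by (auto simp: col_space_def)
        have "column j (Ps ** C) = Ps *v (cadj Ps *v column j P)"
          by (simp add: C_def column_mult)
        also have "\<dots> = Ps *v v" by (simp add: colP v matrix_vector_mul_assoc PsPs)
        finally show ?thesis by (simp add: colP v)
      qed
      hence "mk_mat (\<lambda>j. column j (Ps ** C)) = mk_mat (\<lambda>j. column j P)" by simp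
      thus ?thesis by (simp add: mk_mat_column)
    qed
    have CC: "cadj C ** C = mat 1"
    proof -
      have "cadj C ** C = cadj (Ps ** C) ** (Ps ** C)"
        by (simp add: cadj_mult matrix_mul_assoc[symmetric] mat_cancel[OF PsPs])
      thus ?thesis using PC PP by simp
    qed
    have GG: "cadj G ** G = mat 1"
    proof -
      have "C = cadj G" by (simp add: C_def cG)
      hence "G ** cadj G = mat 1" using CC by simp
      thus ?thesis using matrix_left_right_inverse by blast
    qed
    have W0: "W1 = 0"
    proof -
      have "(norm W1)^2 = 0"
        by (simp add: power2_norm_eq_inner inner_mat_trace cW GG trace_def)
      thus ?thesis by simp
    qed
    have "smin * (norm X1)^2 \<le> 2 * \<eta>"
      using two_eta lowX[of X1] W0 by simp
    hence Xle: "(norm X1)^2 \<le> 2 * \<eta> / smin"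
      using smin_pos by (simp add: pos_le_divide_eq mult.commute)
    have "P - Ps = Ps ** (C - mat 1)" using PC by (simp add: matrix_sub_ldistrib)
    hence "norm (P - Ps) = norm (C - mat 1)" by (simp add: orth_mult_norm[OF PsO])
    also have "\<dots> = norm (cadj (C - mat 1))" by (simp add: norm_cadj)
    also have "\<dots> = norm X1" by (simp add: cadj_diff C_def cG[symmetric] X1_def norm_minus_commute)
    finally have "norm (P - Ps) = norm X1" .
    moreover have "norm X1 \<le> \<epsilon>"
      unfolding \<epsilon>_def smin_eq using Xle by (simp add: real_le_rsqrt)
    ultimately show "frob_norm (P - Ps) \<le> \<epsilon>" by (simp add: frob_norm_eq)
  qed
  show ?thesis using a1 a2 b c by blast
qed

end
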